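(* Let $k$ be a positive integer and let $D=(V,A,w)$ be a weighted digraph with maximum out-degree $\Delta^+(D)\le k$ or maximum in-degree $\Delta^-(D)\le k$. Then $\mathrm{mac}(D)\ge\left(\frac14+\frac{1}{8k+4}\right)w(D)$.
   Context: A weighted digraph $D=(V,A,w)$ is a digraph without loops or parallel arcs (opposite arcs allowed) with weights $w:A\to\mathbb{R}_{\ge0}$; $w(D)$ is the total arc weight. Degrees are numbers of arcs (unweighted). For a partition $(X,Y)$ of $V$, $w(X,Y)$ is the total weight of arcs from $X$ to $Y$, and $\mathrm{mac}(D)=\max_{(X,Y)} w(X,Y)$ over all partitions. *)

theory Defs
  imports Complex_Main
begin

text \<open>A weighted digraph is given by a finite vertex set V, an arc set A of ordered
pairs (no parallel arcs by construction; opposite arcs allowed), without loops,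
and a nonnegative weight function w on A.\<close>

definition weighted_digraph :: "'a set \<Rightarrow> ('a \<times> 'a) set \<Rightarrow> ('a \<times> 'a \<Rightarrow> real) \<Rightarrow> bool" where
  "weighted_digraph V A w \<longleftrightarrow> finite V \<and> A \<subseteq> V \<times> V \<and> (\<forall>v. (v, v) \<notin> A)
     \<and> (\<forall>a\<in>A. w a \<ge> 0)"

definition total_weight :: "('a \<times> 'a) set \<Rightarrow> ('a \<times> 'a \<Rightarrow> real) \<Rightarrow> real" where
  "total_weight A w = (\<Sum>a\<in>A. w a)"

definition out_degree :: "('a \<times> 'a) set \<Rightarrow> 'a \<Rightarrow> nat" where
  "out_degree A v = card {u. (v, u) \<in> A}"

definition in_degree :: "('a \<times> 'a) set \<Rightarrow> 'a \<Rightarrow> nat" where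
  "in_degree A v = card {u. (u, v) \<in> A}"

definition cut_weight :: "('a \<times> 'a) set \<Rightarrow> ('a \<times> 'a \<Rightarrow> real) \<Rightarrow> 'a set \<Rightarrow> 'a set \<Rightarrow> real" where
  "cut_weight A w X Y = (\<Sum>a\<in>{(x, y) \<in> A. x \<in> X \<and> y \<in> Y}. w a)"

definition mac :: "'a set \<Rightarrow> ('a \<times> 'a) set \<Rightarrow> ('a \<times> 'a \<Rightarrow> real) \<Rightarrow> real" where
  "mac V A w = Max ((\<lambda>X. cut_weight A w X (V - X)) ` Pow V)"

end

theory Submission imports Defs begin

lemma card_filter_sum: "finite S \<Longrightarrow> card {u\<in>S. P u} = (\<Sum>u\<in>S. if P u then 1 else 0::nat)"
  by (simp add: sum.inter_filter[symmetric])

lemma low_deg: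
  fixes A :: "('a \<times> 'a) set" and S :: "'a set"
  assumes fin: "finite S" and ne: "S \<noteq> {}"
    and outd: "\<forall>v\<in>S. card {u\<in>S. (v,u)\<in>A} \<le> k"
  shows "\<exists>v\<in>S. card {u\<in>S. (u,v)\<in>A \<or> (v,u)\<in>A} \<le> 2*k"
proof (rule ccontr)
  assume "\<not> ?thesis"
  hence big: "\<forall>v\<in>S. 2*k+1 \<le> card {u\<in>S. (u,v)\<in>A \<or> (v,u)\<in>A}" by auto
  have le: "card {u\<in>S. (u,v)\<in>A \<or> (v,u)\<in>A} \<le> card {u\<in>S. (u,v)\<in>A} + card {u\<in>S. (v,u)\<in>A}" for v
  proof -
    have "{u\<in>S. (u,v)\<in>A \<or> (v,u)\<in>A} = {u\<in>S. (u,v)\<in>A} \<union> {u\<in>S. (v,u)\<in>A}" by auto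
    thus ?thesis using card_Un_le[of "{u\<in>S. (u,v)\<in>A}" "{u\<in>S. (v,u)\<in>A}"] by (simp only:)
  qed
  have swap: "(\<Sum>v\<in>S. card {u\<in>S. (u,v)\<in>A}) = (\<Sum>v\<in>S. card {u\<in>S. (v,u)\<in>A})"
  proof -
    have "(\<Sum>v\<in>S. card {u\<in>S. (u,v)\<in>A}) = (\<Sum>v\<in>S. \<Sum>u\<in>S. if (u,v)\<in>A then 1 else 0)"
      using fin by (simp add: card_filter_sum)
    also have "\<dots> = (\<Sum>u\<in>S. \<Sum>v\<in>S. if (u,v)\<in>A then 1 else 0)" by (rule sum.swap)
    also have "\<dots> = (\<Sum>u\<in>S. card {v\<in>S. (u,v)\<in>A})"
      using fin by (simp add: card_filter_sum)
    finally show ?thesis .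
  qed
  have "(2*k+1) * card S = (\<Sum>v\<in>S. 2*k+1)" by simp
  also have "\<dots> \<le> (\<Sum>v\<in>S. card {u\<in>S. (u,v)\<in>A \<or> (v,u)\<in>A})"
    by (rule sum_mono) (use big in blast)
  also have "\<dots> \<le> (\<Sum>v\<in>S. card {u\<in>S. (u,v)\<in>A} + card {u\<in>S. (v,u)\<in>A})"
    by (rule sum_mono) (rule le)
  also have "\<dots> = 2 * (\<Sum>v\<in>S. card {u\<in>S. (v,u)\<in>A})"
    by (simp only: sum.distrib swap mult_2)
  also have "\<dots> \<le> 2 * (k * card S)"
  proof -
    have "(\<Sum>v\<in>S. card {u\<in>S. (v,u)\<in>A}) \<le> (\<Sum>v\<in>S. k)"
      by (rule sum_mono) (use outd in blast)
    thus ?thesis by (simp add: mult.commute)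
  qed
  finally have "(2*k+1) * card S \<le> 2*k*card S" by simp
  moreover have "card S > 0" using fin ne by auto
  ultimately show False by simp
qed

lemma coloring:
  fixes A :: "('a \<times> 'a) set"
  assumes fin: "finite V" and sub: "A \<subseteq> V \<times> V" and noloop: "\<forall>v. (v,v) \<notin> A"
    and outd: "\<forall>v\<in>V. card {u. (v,u)\<in>A} \<le> k"
  shows "\<exists>c::'a\<Rightarrow>nat. (\<forall>v\<in>V. c v < 2*k+1) \<and> (\<forall>(u,v)\<in>A. c u \<noteq> c v)"
proof -
  have "\<forall>S. S \<subseteq> V \<longrightarrow> (\<exists>c::'a\<Rightarrow>nat. (\<forall>v\<in>S. c v < 2*k+1) \<and> (\<forall>u\<in>S. \<forall>v\<in>S. (u,v)\<in>A \<longrightarrow> c u \<noteq> c v))" (is "\<forall>S. ?P S")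
  proof (intro allI)
    fix S show "?P S"
    proof (induction "card S" arbitrary: S rule: less_induct)
      case less
      show ?case
      proof
        assume SV: "S \<subseteq> V"
        have finS: "finite S" using SV fin finite_subset by blast
        show "\<exists>c::'a\<Rightarrow>nat. (\<forall>v\<in>S. c v < 2*k+1) \<and> (\<forall>u\<in>S. \<forall>v\<in>S. (u,v)\<in>A \<longrightarrow> c u \<noteq> c v)"
        proof (cases "S = {}")
          case True thus ?thesis by auto
        next
          case False
          have od: "\<forall>v\<in>S. card {u\<in>S. (v,u)\<in>A} \<le> k"
          proof
            fix v assume "v \<in> S"
            hence "card {u\<in>S. (v,u)\<in>A} \<le> card {u. (v,u)\<in>A}"
            proof (intro card_mono)
              show "finite {u. (v,u)\<in>A}" by (rule finite_subset[of _ V]) (use sub fin in auto)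
            qed auto
            thus "card {u\<in>S. (v,u)\<in>A} \<le> k" using outd \<open>v\<in>S\<close> SV by force
          qed
          obtain v where vS: "v \<in> S" and dv: "card {u\<in>S. (u,v)\<in>A \<or> (v,u)\<in>A} \<le> 2*k"
            using low_deg[OF finS False od] by blast
          have "card (S - {v}) < card S" using vS finS by (meson card_Diff1_less)
          have IH: "S - {v} \<subseteq> V \<longrightarrow> (\<exists>c::'a\<Rightarrow>nat. (\<forall>x\<in>S-{v}. c x < 2*k+1) \<and> (\<forall>u\<in>S-{v}. \<forall>x\<in>S-{v}. (u,x)\<in>A \<longrightarrow> c u \<noteq> c x))"
            by (rule less.hyps) fact
          have "S - {v} \<subseteq> V" using SV by auto
          with IH obtain c :: "'a\<Rightarrow>nat" where c1: "\<forall>x\<in>S-{v}. c x < 2*k+1"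
            and c2: "\<forall>u\<in>S-{v}. \<forall>x\<in>S-{v}. (u,x)\<in>A \<longrightarrow> c u \<noteq> c x"
            by blast
          let ?N = "{u\<in>S. (u,v)\<in>A \<or> (v,u)\<in>A}"
          have finN: "finite ?N" using finS by simp
          have "card (c ` ?N) \<le> 2*k" using dv card_image_le[OF finN, of c] by linarith
          hence lt: "card (c ` ?N) < card {..<2*k+1}" by simp
          have "\<not> {..<2*k+1} \<subseteq> c ` ?N"
          proof
            assume "{..<2*k+1} \<subseteq> c ` ?N"
            hence "card {..<2*k+1} \<le> card (c ` ?N)" by (rule card_mono[OF finite_imageI[OF finN]])
            thus False using lt by simp
          qed
          then obtain col where col: "col \<in> {..<2*k+1}" "col \<notin> c ` ?N" by blast
          let ?c = "c(v := col)"
          have "\<forall>x\<in>S. ?c x < 2*k+1" using c1 col by auto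
          moreover have "\<forall>u\<in>S. \<forall>x\<in>S. (u,x)\<in>A \<longrightarrow> ?c u \<noteq> ?c x"
          proof (intro ballI impI)
            fix u x assume u: "u \<in> S" and x: "x \<in> S" and ux: "(u,x)\<in>A"
            have "u \<noteq> x" using ux noloop by auto
            show "?c u \<noteq> ?c x"
            proof (cases "u = v")
              case True thus ?thesis using col x ux \<open>u\<noteq>x\<close> by auto
            next
              case uv: False
              show ?thesis
              proof (cases "x = v")
                case True thus ?thesis using col u ux uv by auto
              next
                case False thus ?thesis using c2 u x ux uv by auto
              qed
            qed
          qed
          ultimately show ?thesis by blast
        qed
      qed
    qed
  qed
  then obtain c where "(\<forall>v\<in>V. c v < 2*k+1)" "(\<forall>u\<in>V. \<forall>v\<in>V. (u,v)\<in>A \<longrightarrow> c u \<noteq> c v)" by blast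
  thus ?thesis using sub by blast
qed

lemma count_sets:
  assumes "i < m" "j < m" "i \<noteq> j" "k \<ge> 1"
  shows "card {I. (I \<subseteq> {..<m} \<and> card I = k) \<and> i\<in>I \<and> j\<notin>I} = (m-2) choose (k-1)"
proof -
  let ?S = "{..<m} - {i,j}"
  let ?L = "{J. J \<subseteq> ?S \<and> card J = k-1}"
  let ?R = "{I. (I \<subseteq> {..<m} \<and> card I = k) \<and> i\<in>I \<and> j\<notin>I}"
  have "bij_betw (insert i) ?L ?R"
  proof (rule bij_betw_byWitness[where f' = "\<lambda>I. I - {i}"])
    show "\<forall>J\<in>?L. insert i J - {i} = J" by auto
    show "\<forall>I\<in>?R. insert i (I - {i}) = I" by auto
    show "insert i ` ?L \<subseteq> ?R"
    proof
      fix I assume "I \<in> insert i ` ?L"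
      then obtain J where J: "J \<in> ?L" "I = insert i J" by blast
      have "finite J" using J(1) finite_subset by auto
      moreover have "i \<notin> J" using J(1) by auto
      ultimately have "card I = k" using J assms(4) by simp
      thus "I \<in> ?R" using J assms by auto
    qed
    show "(\<lambda>I. I - {i}) ` ?R \<subseteq> ?L"
    proof
      fix J assume "J \<in> (\<lambda>I. I - {i}) ` ?R"
      then obtain I where I: "I \<in> ?R" "J = I - {i}" by blast
      have "finite I" using I(1) finite_subset by auto
      hence "card J = k - 1" using I by simp
      thus "J \<in> ?L" using I by auto
    qed
  qed
  hence "card ?L = card ?R" by (rule bij_betw_same_card)
  hence "card ?R = card ?L" by (rule sym)
  also have "\<dots> = card ?S choose (k-1)" by (simp add: n_subsets)
  also have "card ?S = m - 2" using assms by (simp add: card_Diff_subset)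
  finally show ?thesis .
qed


declare binomial_Suc_Suc[simp del]

lemma binom_id:
  assumes "k \<ge> (1::nat)"
  shows "(2*k+1 choose k) * (k*(k+1)) = (2*k+1)*(2*k)*((2*k-1) choose (k-1))"
proof -
  have s: "(2*k+1 choose k) = (2*k+1 choose (k+1))"
    using binomial_symmetric[of k "2*k+1"] by simp
  have a: "Suc (2*k) * (2*k choose k) = (Suc (2*k) choose Suc k) * Suc k"
    by (rule Suc_times_binomial_eq)
  have b0: "Suc (2*k-1) * (2*k-1 choose (k-1)) = (Suc (2*k-1) choose Suc (k-1)) * Suc (k-1)"
    by (rule Suc_times_binomial_eq)
  have e: "Suc (2*k-1) = 2*k" "Suc (k-1) = k" using assms by auto
  have b: "2*k * (2*k-1 choose (k-1)) = (2*k choose k) * k" using b0 unfolding e .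
  have "(2*k+1 choose k) * (k*(k+1)) = ((Suc (2*k) choose Suc k) * Suc k) * k"
    using s by (simp add: algebra_simps)
  also have "\<dots> = Suc (2*k) * ((2*k choose k) * k)"
    using a by (simp add: ac_simps)
  also have "\<dots> = Suc (2*k) * (2*k * (2*k-1 choose (k-1)))"
    by (simp only: b[symmetric])
  also have "\<dots> = (2*k+1)*(2*k)*((2*k-1) choose (k-1))" by (simp add: algebra_simps)
  finally show ?thesis .
qed

theorem mainTheorem2:
  fixes V :: "'a set" and A :: "('a \<times> 'a) set" and w :: "'a \<times> 'a \<Rightarrow> real" and k :: nat
  assumes "k > 0"
    and "weighted_digraph V A w"
    and "(\<forall>v\<in>V. out_degree A v \<le> k) \<or> (\<forall>v\<in>V. in_degree A v \<le> k)"
  shows "mac V A w \<ge> (1/4 + 1 / (8 * real k + 4)) * total_weight A w"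
proof -
  have fin: "finite V" and sub: "A \<subseteq> V \<times> V" and noloop: "\<forall>v. (v,v) \<notin> A"
    using assms(2) unfolding weighted_digraph_def by auto
  have finA: "finite A" using sub fin finite_subset by blast
  obtain c :: "'a \<Rightarrow> nat" where cV: "\<forall>v\<in>V. c v < 2*k+1" and cA: "\<forall>(u,v)\<in>A. c u \<noteq> c v"
  proof -
    from assms(3) show ?thesis
    proof
      assume "\<forall>v\<in>V. out_degree A v \<le> k"
      hence "\<forall>v\<in>V. card {u. (v,u)\<in>A} \<le> k" by (simp add: out_degree_def)
      from coloring[OF fin sub noloop this] that show ?thesis by blast
    next
      assume "\<forall>v\<in>V. in_degree A v \<le> k"
      hence "\<forall>v\<in>V. card {u. (v,u)\<in>A\<inverse>} \<le> k" by (simp add: in_degree_def)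
      moreover have "A\<inverse> \<subseteq> V \<times> V" using sub by auto
      moreover have "\<forall>v. (v,v) \<notin> A\<inverse>" using noloop by auto
      ultimately obtain c :: "'a \<Rightarrow> nat" where c1: "\<forall>v\<in>V. c v < 2*k+1" and c2: "\<forall>(u,v)\<in>A\<inverse>. c u \<noteq> c v"
        using coloring[OF fin, of "A\<inverse>" k] by blast
      have "\<forall>(u,v)\<in>A. c u \<noteq> c v"
      proof (clarify)
        fix u v assume uv: "(u,v)\<in>A" and eq: "c u = c v"
        have "(v,u) \<in> A\<inverse>" using uv by simp
        hence "c v \<noteq> c u" using c2 by blast
        thus False using eq by simp
      qed
      thus ?thesis using that c1 by blast
    qed
  qed
  define m where "m = 2*k+1"
  define F where "F = {I. I \<subseteq> {..<m} \<and> card I = k}"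
  define XI where "XI I = {v\<in>V. c v \<in> I}" for I
  define P where "P I a = (c (fst a) \<in> I \<and> c (snd a) \<notin> I)" for I a
  have finF: "finite F" unfolding F_def
    by (rule finite_subset[of _ "Pow {..<m}"]) auto
  have cardF: "card F = m choose k" unfolding F_def using n_subsets[of "{..<m}" k] by simp
  have cw: "cut_weight A w (XI I) (V - XI I) = (\<Sum>a\<in>A. if P I a then w a else 0)" for I
  proof -
    have "{(x, y) \<in> A. x \<in> XI I \<and> y \<in> V - XI I} = {a\<in>A. P I a}"
      using sub by (auto simp: XI_def P_def)
    thus ?thesis unfolding cut_weight_def using sum.inter_filter[OF finA] by simp
  qed
  have macge: "cut_weight A w (XI I) (V - XI I) \<le> mac V A w" for I
    unfolding mac_def
    by (rule Max_ge) (use fin in \<open>auto simp: XI_def\<close>)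
  have cnt: "card {I\<in>F. P I a} = (m-2) choose (k-1)" if "a \<in> A" for a
  proof -
    obtain u v where a: "a = (u,v)" by (cases a)
    have "u \<in> V" "v \<in> V" using sub that a by auto
    hence "c u < m" "c v < m" using cV m_def by auto
    moreover have "c u \<noteq> c v" using cA that a by auto
    ultimately have "card {I. (I \<subseteq> {..<m} \<and> card I = k) \<and> c u\<in>I \<and> c v\<notin>I} = (m-2) choose (k-1)"
      using count_sets[of "c u" m "c v" k] assms(1) by simp
    moreover have "{I\<in>F. P I a} = {I. (I \<subseteq> {..<m} \<and> card I = k) \<and> c u\<in>I \<and> c v\<notin>I}"
      by (auto simp: F_def P_def a)
    ultimately show ?thesis by simp
  qed
  have "(\<Sum>I\<in>F. cut_weight A w (XI I) (V - XI I)) = (\<Sum>I\<in>F. \<Sum>a\<in>A. if P I a then w a else 0)"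
    by (simp add: cw)
  also have "\<dots> = (\<Sum>a\<in>A. \<Sum>I\<in>F. if P I a then w a else 0)" by (rule sum.swap)
  also have "\<dots> = (\<Sum>a\<in>A. w a * real ((m-2) choose (k-1)))"
  proof (rule sum.cong[OF refl])
    fix a assume "a \<in> A"
    have "(\<Sum>I\<in>F. if P I a then w a else 0) = (\<Sum>I\<in>{I\<in>F. P I a}. w a)"
      using sum.inter_filter[OF finF, of "\<lambda>_. w a" "\<lambda>I. P I a"] by simp
    also have "\<dots> = w a * real (card {I\<in>F. P I a})" by simp
    finally show "(\<Sum>I\<in>F. if P I a then w a else 0) = w a * real ((m-2) choose (k-1))"
      using cnt[OF \<open>a\<in>A\<close>] by simp
  qed
  also have "\<dots> = real ((m-2) choose (k-1)) * total_weight A w"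
    by (simp add: total_weight_def sum_distrib_right mult.commute)
  finally have eq: "(\<Sum>I\<in>F. cut_weight A w (XI I) (V - XI I)) = real ((m-2) choose (k-1)) * total_weight A w" .
  have "(\<Sum>I\<in>F. cut_weight A w (XI I) (V - XI I)) \<le> (\<Sum>I\<in>F. mac V A w)"
    by (rule sum_mono) (rule macge)
  hence key: "real ((2*k-1) choose (k-1)) * total_weight A w \<le> real ((2*k+1) choose k) * mac V A w"
    using eq cardF m_def by simp
  have bi: "real ((2*k+1) choose k) * (real k * (real k + 1)) = (2*real k+1)*(2*real k)*real ((2*k-1) choose (k-1))"
  proof -
    have "real ((2*k+1 choose k) * (k*(k+1))) = real ((2*k+1)*(2*k)*((2*k-1) choose (k-1)))"
      using binom_id[of k] assms(1) by simp
    thus ?thesis by (simp only: of_nat_mult of_nat_add of_nat_1 of_nat_numeral)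
  qed
  have pos: "real ((2*k+1) choose k) > 0" by simp
  have coef: "(1/4 + 1 / (8 * real k + 4)) * real ((2*k+1) choose k) = real ((2*k-1) choose (k-1))"
  proof -
    have kp: "real k > 0" using assms(1) by simp
    have "(1/4 + 1 / (8 * real k + 4)) = (real k + 1) / (4 * real k + 2)" by (simp add: field_simps)
    hence "(1/4 + 1 / (8 * real k + 4)) * real ((2*k+1) choose k) = (real k + 1) * real ((2*k+1) choose k) / (4 * real k + 2)" by simp
    also have "\<dots> = real k * ((real k + 1) * real ((2*k+1) choose k)) / (real k * (4 * real k + 2))"
      by (rule nonzero_mult_divide_mult_cancel_left[symmetric]) (use kp in simp)
    also have "\<dots> = real ((2*k+1) choose k) * (real k * (real k + 1)) / (real k * (4 * real k + 2))"
      by (simp only: mult.assoc mult.commute mult.left_commute)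
    also have "\<dots> = (2*real k+1)*(2*real k)*real ((2*k-1) choose (k-1)) / (real k * (4 * real k + 2))"
      by (simp only: bi)
    also have "\<dots> = real ((2*k-1) choose (k-1))"
    proof -
      have nz: "real k * (4 * real k + 2) \<noteq> 0" using kp by simp
      have "(2*real k+1)*(2*real k)*real ((2*k-1) choose (k-1)) = real ((2*k-1) choose (k-1)) * (real k * (4 * real k + 2))"
        by (simp add: algebra_simps)
      thus ?thesis by (simp only: nonzero_mult_div_cancel_right[OF nz])
    qed
    finally show ?thesis .
  qed
  have "(1/4 + 1 / (8 * real k + 4)) * total_weight A w * real ((2*k+1) choose k) \<le> mac V A w * real ((2*k+1) choose k)"
    using key coef by (simp add: ac_simps)
  thus ?thesis using pos by simp
qed

end
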